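(* Let $f,g_1,\dots,g_m,h_1,\dots,h_l\in\mathbb{R}[\mathbf{x}]$, $g=\{g_i\}_{i\in[m]}$, $h=\{h_j\}_{j\in[l]}$, and consider the polynomial optimization problem (POP) of minimizing $f$ over $S(g)\cap V(h)$. 1. For every integer $k\ge k_{\min}$ the following conditions are equivalent: (a) $(0,\infty)\subseteq Q_k^\circ(g)+I_k(h)$; (b) $\delta\in Q_k^\circ(g)+I_k(h)$ for every $\delta>0$; (c) $1\in Q_k^\circ(g)+I_k(h)$. If these conditions hold for all integers $k\ge k_{\min}$, then the POP has the constant trace property (CTP). 2. Assume that $h=\emptyset$ and that $S(g)$ has nonempty interior. Then the POP has CTP if and only if $(0,\infty)\subseteq Q_k^\circ(g)$ for every integer $k\ge k_{\min}$.
   Context: $\mathbf{x}=(x_1,\dots,x_n)$; $\mathbb{R}[\mathbf{x}]_d$ denotes polynomials of degree at most $d$, $\Sigma[\mathbf{x}]_d$ sums of squares of polynomials of degree at most $d$. For $p\in\mathbb{R}[\mathbf{x}]$, $\lceil p\rceil:=\lceil \deg(p)/2\rceil$. $\mathbb{N}^n_d:=\{\alpha\in\mathbb{N}^n:|\alpha|\le d\}$, $s(d):=\binom{n+d}{n}$, and $\mathbf{v}_d(\mathbf{x})=(\mathbf{x}^\alpha)_{\alpha\in\mathbb{N}^n_d}$ is the vector of monomials of degree at most $d$ (graded lexicographic order). $S(g):=\{\mathbf{x}\in\mathbb{R}^n: g_i(\mathbf{x})\ge0,\ i\in[m]\}$, $V(h):=\{\mathbf{x}\in\mathbb{R}^n:h_j(\mathbf{x})=0,\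 j\in[l]\}$. $k_{\min}:=\max\{\lceil f\rceil,\lceil g_i\rceil\ (i\in[m]),\lceil h_j\rceil\ (j\in[l])\}$. $Q_k^\circ(g):=\{\mathbf{v}_k^\top\mathbf{G}_0\mathbf{v}_k+\sum_{i\in[m]}g_i\mathbf{v}_{k-\lceil g_i\rceil}^\top\mathbf{G}_i\mathbf{v}_{k-\lceil g_i\rceil}:\ \mathbf{G}_i \text{ real symmetric positive definite},\ i\in\{0\}\cup[m]\}$ (interior of the truncated quadratic module). $I_k(h):=\{\sum_{j\in[l]}\psi_jh_j:\ \psi_j\in\mathbb{R}[\mathbf{x}]_{2(k-\lceil h_j\rceil)}\}$ (with $I_k(\emptyset)=\{0\}$). For $\mathbf{y}=(y_\alpha)_{\alpha\in\mathbb{N}^n_{2k}}$: the moment matrix $\mathbf{M}_d(\mathbf{y})=(y_{\alpha+\beta})_{\alpha,\beta\in\mathbb{N}^n_d}$ and, for $q=\sum_\gamma q_\gamma\mathbf{x}^\gamma$, the localizing matrix $\mathbf{M}_d(q\,\mathbf{y})=(\sum_\gamma q_\gamma y_{\alpha+\beta+\gamma})_{\alpha,\beta\in\mathbb{N}^n_d}$. $\mathcal{S}_k$ is the set of real symmetric block-diagonal matrices $\mathrm{diag}(\mathbf{X}_0,\dots,\mathbf{X}_m)$ with $\mathbf{X}_0$ of size $s(k)$ and $\mathbf{X}_i$ of size $s(k-\lceil g_i\rceil)$; $\mathbf{D}_k(\mathbf{y}):=\mathrm{diag}(\mathbf{M}_k(\mathbf{y}),\mathbf{M}_{k-\lceil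 g_1\rceil}(g_1\mathbf{y}),\dots,\mathbf{M}_{k-\lceil g_m\rceil}(g_m\mathbf{y}))\in\mathcal{S}_k$. CTP: the POP has CTP if for every integer $k\ge k_{\min}$ there exist $a_k>0$ and a positive definite $\mathbf{P}_k\in\mathcal{S}_k$ such that every $\mathbf{y}\in\mathbb{R}^{s(2k)}$ with $\mathbf{M}_{k-\lceil h_j\rceil}(h_j\mathbf{y})=0$ for all $j\in[l]$ and $y_{\mathbf{0}}=1$ satisfies $\mathrm{trace}(\mathbf{P}_k\mathbf{D}_k(\mathbf{y})\mathbf{P}_k)=a_k$. *)

theory Defs
  imports "HOL-Analysis.Analysis" "HOL-Library.Poly_Mapping"
begin

text \<open>Real polynomials in the variables indexed by the finite type 'n
  (so n = CARD('n)): finitely supported maps from exponent vectors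
  (finitely supported maps 'n \<Rightarrow> nat) to real coefficients.\<close>

type_synonym 'n rpoly = "('n \<Rightarrow>\<^sub>0 nat) \<Rightarrow>\<^sub>0 real"

definition mdeg :: "('n \<Rightarrow>\<^sub>0 nat) \<Rightarrow> nat" where
  "mdeg \<alpha> = (\<Sum>i\<in>Poly_Mapping.keys \<alpha>. Poly_Mapping.lookup \<alpha> i)"

definition pdeg :: "'n rpoly \<Rightarrow> nat" where
  "pdeg p = (if p = 0 then 0 else Max (mdeg ` Poly_Mapping.keys p))"

definition pceil :: "'n rpoly \<Rightarrow> nat" where
  "pceil p = (pdeg p + 1) div 2"

definition peval :: "'n::finite rpoly \<Rightarrow> ('n \<Rightarrow> real) \<Rightarrow> real" where
  "peval p x = (\<Sum>\<alpha>\<in>Poly_Mapping.keys p. Poly_Mapping.lookup p \<alpha> * (\<Prod>i\<in>UNIV. x i ^ Poly_Mapping.lookup \<alpha> i))"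

definition pconst :: "real \<Rightarrow> 'n rpoly" where
  "pconst c = Poly_Mapping.single 0 c"

definition mons :: "nat \<Rightarrow> ('n::finite \<Rightarrow>\<^sub>0 nat) set" where
  "mons d = {\<alpha>. mdeg \<alpha> \<le> d}"

definition kmin :: "'n rpoly \<Rightarrow> 'n rpoly list \<Rightarrow> 'n rpoly list \<Rightarrow> nat" where
  "kmin f g h = Max (set (map pceil (f # g @ h)))"

definition semialg :: "'n::finite rpoly list \<Rightarrow> ('n \<Rightarrow> real) set" where
  "semialg g = {x. \<forall>i<length g. 0 \<le> peval (g ! i) x}"

definition posdef :: "'a set \<Rightarrow> ('a \<Rightarrow> 'a \<Rightarrow> real) \<Rightarrow> bool" where
  "posdef A G \<longleftrightarrow> (\<forall>a\<in>A. \<forall>b\<in>A. G a b = G b a) \<and>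
     (\<forall>v. (\<exists>a\<in>A. v a \<noteq> 0) \<longrightarrow> 0 < (\<Sum>a\<in>A. \<Sum>b\<in>A. v a * G a b * v b))"

definition gram_poly :: "nat \<Rightarrow> (('n::finite \<Rightarrow>\<^sub>0 nat) \<Rightarrow> ('n \<Rightarrow>\<^sub>0 nat) \<Rightarrow> real) \<Rightarrow> 'n rpoly" where
  "gram_poly d G = (\<Sum>\<alpha>\<in>mons d. \<Sum>\<beta>\<in>mons d. Poly_Mapping.single (\<alpha> + \<beta>) (G \<alpha> \<beta>))"

definition qm_int :: "nat \<Rightarrow> 'n::finite rpoly list \<Rightarrow> 'n rpoly set" where
  "qm_int k g = {p. \<exists>G0 Gs. length Gs = length g \<and> posdef (mons k) G0 \<and>
      (\<forall>i<length g. posdef (mons (k - pceil (g ! i))) (Gs ! i)) \<and>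
      p = gram_poly k G0 + (\<Sum>i<length g. g ! i * gram_poly (k - pceil (g ! i)) (Gs ! i))}"

definition trunc_ideal :: "nat \<Rightarrow> 'n rpoly list \<Rightarrow> 'n rpoly set" where
  "trunc_ideal k h = {p. \<exists>\<psi>s. length \<psi>s = length h \<and>
      (\<forall>j<length h. pdeg (\<psi>s ! j) \<le> 2 * (k - pceil (h ! j))) \<and>
      p = (\<Sum>j<length h. \<psi>s ! j * h ! j)}"

definition QI :: "nat \<Rightarrow> 'n::finite rpoly list \<Rightarrow> 'n rpoly list \<Rightarrow> 'n rpoly set" where
  "QI k g h = {p + q | p q. p \<in> qm_int k g \<and> q \<in> trunc_ideal k h}"

definition mom_mat :: "(('n \<Rightarrow>\<^sub>0 nat) \<Rightarrow> real) \<Rightarrow> ('n \<Rightarrow>\<^sub>0 nat) \<Rightarrow> ('n \<Rightarrow>\<^sub>0 nat) \<Rightarrow> real" where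
  "mom_mat y \<alpha> \<beta> = y (\<alpha> + \<beta>)"

definition loc_mat :: "'n rpoly \<Rightarrow> (('n \<Rightarrow>\<^sub>0 nat) \<Rightarrow> real) \<Rightarrow> ('n \<Rightarrow>\<^sub>0 nat) \<Rightarrow> ('n \<Rightarrow>\<^sub>0 nat) \<Rightarrow> real" where
  "loc_mat q y \<alpha> \<beta> = (\<Sum>\<gamma>\<in>Poly_Mapping.keys q. Poly_Mapping.lookup q \<gamma> * y (\<alpha> + \<beta> + \<gamma>))"

definition trace_PXP :: "'a set \<Rightarrow> ('a \<Rightarrow> 'a \<Rightarrow> real) \<Rightarrow> ('a \<Rightarrow> 'a \<Rightarrow> real) \<Rightarrow> real" where
  "trace_PXP A P X = (\<Sum>a\<in>A. \<Sum>b\<in>A. \<Sum>c\<in>A. P a b * X b c * P c a)"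

text \<open>A positive definite element of S_k is a block-diagonal
  matrix diag(P0, Ps!0, ..., Ps!(m-1)) with positive definite blocks; the trace of
  P D_k(y) P is the sum of the blockwise traces. y ranges over all moment sequences
  (only the entries y_alpha with |alpha| <= 2k are ever used).\<close>
definition CTP :: "'n::finite rpoly \<Rightarrow> 'n rpoly list \<Rightarrow> 'n rpoly list \<Rightarrow> bool" where
  "CTP f g h \<longleftrightarrow> (\<forall>k\<ge>kmin f g h. \<exists>a>0. \<exists>P0 Ps. length Ps = length g \<and>
      posdef (mons k) P0 \<and> (\<forall>i<length g. posdef (mons (k - pceil (g ! i))) (Ps ! i)) \<and>
      (\<forall>y. (\<forall>j<length h. \<forall>\<alpha>\<in>mons (k - pceil (h ! j)). \<forall>\<beta>\<in>mons (k - pceil (h ! j)).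
               loc_mat (h ! j) y \<alpha> \<beta> = 0) \<and> y 0 = 1 \<longrightarrow>
           trace_PXP (mons k) P0 (mom_mat y) +
           (\<Sum>i<length g. trace_PXP (mons (k - pceil (g ! i))) (Ps ! i) (loc_mat (g ! i) y)) = a))"

end

theory Submission
  imports Defs
begin


definition ip :: "'a set \<Rightarrow> ('a \<Rightarrow> real) \<Rightarrow> ('a \<Rightarrow> real) \<Rightarrow> real" where
  "ip A x y = (\<Sum>a\<in>A. x a * y a)"
definition supp :: "'a set \<Rightarrow> ('a \<Rightarrow> real) \<Rightarrow> bool" where
  "supp A x \<longleftrightarrow> (\<forall>a. a \<notin> A \<longrightarrow> x a = 0)"
definition mv :: "'a set \<Rightarrow> ('a \<Rightarrow> 'a \<Rightarrow> real) \<Rightarrow> ('a \<Rightarrow> real) \<Rightarrow> 'a \<Rightarrow> real" where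
  "mv A S x a = (if a \<in> A then (\<Sum>b\<in>A. S a b * x b) else 0)"
definition ortho :: "'a set \<Rightarrow> (nat \<Rightarrow> 'a \<Rightarrow> real) \<Rightarrow> nat \<Rightarrow> bool" where
  "ortho A u r \<longleftrightarrow> (\<forall>i<r. \<forall>j<r. ip A (u i) (u j) = (if i = j then 1 else 0))"
definition res :: "'a set \<Rightarrow> (nat \<Rightarrow> 'a \<Rightarrow> real) \<Rightarrow> nat \<Rightarrow> ('a \<Rightarrow> real) \<Rightarrow> 'a \<Rightarrow> real" where
  "res A u r v = (\<lambda>c. v c - (\<Sum>i<r. ip A v (u i) * u i c))"
definition ev :: "'a \<Rightarrow> 'a \<Rightarrow> real" where
  "ev a = (\<lambda>c. if c = a then 1 else 0)"

lemma ip_sym: "ip A x y = ip A y x"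
  unfolding ip_def by (simp add: mult.commute)

lemma ip_nonneg: "0 \<le> ip A x x"
  unfolding ip_def by (intro sum_nonneg) auto

lemma ip_zero: "finite A \<Longrightarrow> ip A x x = 0 \<Longrightarrow> a \<in> A \<Longrightarrow> x a = 0"
  unfolding ip_def by (subst (asm) sum_nonneg_eq_0_iff) auto

lemma ip_ev: "finite A \<Longrightarrow> a \<in> A \<Longrightarrow> ip A (ev a) z = z a"
proof -
  assume "finite A" "a \<in> A"
  have "ip A (ev a) z = (\<Sum>c\<in>A. if c = a then z c else 0)"
    unfolding ip_def ev_def by (intro sum.cong) auto
  then show ?thesis using \<open>finite A\<close> \<open>a \<in> A\<close> by simp
qed

lemma ip_res: "ip A (res A u r v) w = ip A v w - (\<Sum>i<r. ip A v (u i) * ip A (u i) w)"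
proof -
  have "ip A (res A u r v) w = (\<Sum>a\<in>A. v a * w a - (\<Sum>i<r. ip A v (u i) * (u i a * w a)))"
    unfolding ip_def res_def by (intro sum.cong refl) (simp add: left_diff_distrib sum_distrib_right mult.assoc)
  also have "\<dots> = ip A v w - (\<Sum>i<r. ip A v (u i) * ip A (u i) w)"
    unfolding ip_def sum_subtractf by (subst sum.swap) (simp add: sum_distrib_left)
  finally show ?thesis .
qed

lemma ortho_sum: "ortho A u r \<Longrightarrow> j < r \<Longrightarrow> (\<Sum>i<r. c i * ip A (u i) (u j)) = c j"
proof -
  assume o: "ortho A u r" and j: "j < r"
  have "(\<Sum>i<r. c i * ip A (u i) (u j)) = (\<Sum>i<r. if i = j then c i else 0)"
    using o j unfolding ortho_def by (intro sum.cong) auto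
  then show ?thesis using j by simp
qed

lemma ip_res_u: "ortho A u r \<Longrightarrow> j < r \<Longrightarrow> ip A (res A u r v) (u j) = 0"
  by (simp add: ip_res ortho_sum[of A u r j "\<lambda>i. ip A v (u i)"])

lemma bessel: "ortho A u r \<Longrightarrow> ip A (res A u r v) (res A u r v) = ip A v v - (\<Sum>i<r. (ip A v (u i))\<^sup>2)"
proof -
  assume o: "ortho A u r"
  have "ip A (res A u r v) (res A u r v) = ip A v (res A u r v) - (\<Sum>i<r. ip A v (u i) * ip A (u i) (res A u r v))"
    by (rule ip_res)
  also have "(\<Sum>i<r. ip A v (u i) * ip A (u i) (res A u r v)) = 0"
    using o by (intro sum.neutral) (auto simp: ip_sym[of A "u _"] ip_res_u)
  also have "ip A v (res A u r v) = ip A v v - (\<Sum>i<r. (ip A v (u i))\<^sup>2)"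
    by (subst ip_sym) (simp add: ip_res ip_sym[of A "u _"] power2_eq_square)
  finally show ?thesis by simp
qed

lemma sumsq_eq: "finite A \<Longrightarrow> (\<Sum>a\<in>A. \<Sum>i<r. (u i a)\<^sup>2) = (\<Sum>i<r. ip A (u i) (u i))"
  unfolding ip_def by (subst sum.swap) (simp add: power2_eq_square)

lemma ortho_card:
  assumes A: "finite A" and o: "ortho A u m"
  shows "m \<le> card A"
proof -
  have "real m = (\<Sum>i<m. ip A (u i) (u i))" using o by (simp add: ortho_def)
  also have "\<dots> = (\<Sum>a\<in>A. \<Sum>i<m. (u i a)\<^sup>2)" by (rule sumsq_eq[OF A, symmetric])
  also have "\<dots> \<le> (\<Sum>a\<in>A. 1)"
  proof (rule sum_mono)
    fix a assume a: "a \<in> A"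
    have "0 \<le> ip A (res A u m (ev a)) (res A u m (ev a))" by (rule ip_nonneg)
    also have "\<dots> = 1 - (\<Sum>i<m. (u i a)\<^sup>2)" using bessel[OF o] ip_ev[OF A a] by (simp add: ev_def)
    finally show "(\<Sum>i<m. (u i a)\<^sup>2) \<le> 1" by simp
  qed
  finally show ?thesis by simp
qed

definition nrm :: "'a set \<Rightarrow> ('a \<Rightarrow> real) \<Rightarrow> 'a \<Rightarrow> real" where
  "nrm A w = (\<lambda>c. if c \<in> A then w c / sqrt (ip A w w) else 0)"

lemma nrm_ip: "ip A (nrm A w) z = ip A w z / sqrt (ip A w w)"
  unfolding nrm_def ip_def by (simp add: sum_divide_distrib)

lemma nrm_props:
  assumes "0 < ip A w w"
  shows "supp A (nrm A w)" "ip A (nrm A w) (nrm A w) = 1"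
proof -
  show "supp A (nrm A w)" unfolding supp_def nrm_def by auto
  have "ip A (nrm A w) (nrm A w) = ip A w (nrm A w) / sqrt (ip A w w)" by (rule nrm_ip)
  also have "ip A w (nrm A w) = ip A w w / sqrt (ip A w w)" by (subst ip_sym) (rule nrm_ip)
  finally show "ip A (nrm A w) (nrm A w) = 1" using assms by simp
qed

lemma exists_orth:
  assumes A: "finite A" and o: "ortho A u r" and r: "r < card A"
  shows "\<exists>x. supp A x \<and> ip A x x = 1 \<and> (\<forall>i<r. ip A x (u i) = 0)"
proof -
  have "\<exists>a\<in>A. 0 < ip A (res A u r (ev a)) (res A u r (ev a))"
  proof (rule ccontr)
    assume "\<not> ?thesis"
    then have z: "\<And>a. a \<in> A \<Longrightarrow> ip A (res A u r (ev a)) (res A u r (ev a)) = 0"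
      using ip_nonneg by (metis linorder_not_less order_antisym)
    have "real (card A) = (\<Sum>a\<in>A. 1)" by simp
    also have "\<dots> = (\<Sum>a\<in>A. \<Sum>i<r. (u i a)\<^sup>2)"
    proof (rule sum.cong[OF refl])
      fix a assume a: "a \<in> A"
      show "1 = (\<Sum>i<r. (u i a)\<^sup>2)" using z[OF a] bessel[OF o, of "ev a"] ip_ev[OF A a] by (simp add: ev_def)
    qed
    also have "\<dots> = (\<Sum>i<r. ip A (u i) (u i))" by (rule sumsq_eq[OF A])
    also have "\<dots> = real r" using o by (simp add: ortho_def)
    finally show False using r by simp
  qed
  then obtain a where a: "a \<in> A" and p: "0 < ip A (res A u r (ev a)) (res A u r (ev a))" by blast
  have "\<forall>i<r. ip A (nrm A (res A u r (ev a))) (u i) = 0"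
    by (simp add: nrm_ip ip_res_u[OF o])
  then show ?thesis using nrm_props[OF p] by blast
qed



definition symm :: "'a set \<Rightarrow> ('a \<Rightarrow> 'a \<Rightarrow> real) \<Rightarrow> bool" where
  "symm A S \<longleftrightarrow> (\<forall>a\<in>A. \<forall>b\<in>A. S a b = S b a)"

lemma compact_box:
  "compact (Pi UNIV (\<lambda>a. if a \<in> A then {-1..1::real} else {0}))"
proof -
  have "compactin (product_topology (\<lambda>_. euclidean) UNIV)
      (PiE UNIV (\<lambda>a. if a \<in> A then {-1..1::real} else {0}))"
    by (subst compactin_PiE) auto
  then show ?thesis by (simp add: euclidean_product_topology PiE_UNIV_domain)
qed

lemma qf_eq: "(\<lambda>z. ip A z (mv A S z)) = (\<lambda>z. \<Sum>a\<in>A. z a * (\<Sum>b\<in>A. S a b * z b))"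
  unfolding ip_def mv_def by (intro ext sum.cong) auto

lemma qf_eq': "ip A z (mv A S z) = (\<Sum>a\<in>A. z a * (\<Sum>b\<in>A. S a b * z b))"
  using qf_eq[of A S] by metis

lemma cont_coord: "continuous_on S (\<lambda>x::'a\<Rightarrow>real. x i)"
  by (rule continuous_on_subset[OF continuous_on_product_coordinates]) simp

definition KK :: "'a set \<Rightarrow> (nat \<Rightarrow> 'a \<Rightarrow> real) \<Rightarrow> nat \<Rightarrow> ('a \<Rightarrow> real) set" where
  "KK A u r = {x. supp A x \<and> ip A x x = 1 \<and> (\<forall>i<r. ip A x (u i) = 0)}"

lemma KK_closed: "closed (KK A u r)"
proof -
  have e: "KK A u r = {x. (\<forall>a. a \<notin> A \<longrightarrow> x a = 0) \<and> (\<Sum>a\<in>A. x a * x a) = 1 \<and>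
      (\<forall>i. i < r \<longrightarrow> (\<Sum>a\<in>A. x a * u i a) = 0)}"
    unfolding KK_def supp_def ip_def by auto
  have c1: "closed {x::'a\<Rightarrow>real. a \<notin> A \<longrightarrow> x a = 0}" for a
    by (cases "a \<in> A") (auto intro!: closed_Collect_eq continuous_intros)
  have c2: "closed {x::'a\<Rightarrow>real. i < r \<longrightarrow> (\<Sum>a\<in>A. x a * u i a) = 0}" for i
    by (cases "i < r") (auto intro!: closed_Collect_eq continuous_intros)
  have c3: "closed {x::'a\<Rightarrow>real. (\<Sum>a\<in>A. x a * x a) = 1}"
    by (auto intro!: closed_Collect_eq continuous_intros)
  show ?thesis unfolding e
    by (intro closed_Collect_conj closed_Collect_all c1 c2 c3)
qed

lemma KK_box: "finite A \<Longrightarrow> KK A u r \<subseteq> Pi UNIV (\<lambda>a. if a \<in> A then {-1..1::real} else {0})"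
proof
  fix x assume A: "finite A" and x: "x \<in> KK A u r"
  show "x \<in> Pi UNIV (\<lambda>a. if a \<in> A then {-1..1::real} else {0})"
  proof (rule Pi_I)
    fix a
    show "x a \<in> (if a \<in> A then {-1..1} else {0})"
    proof (cases "a \<in> A")
      case True
      have "(x a)\<^sup>2 \<le> (\<Sum>b\<in>A. (x b)\<^sup>2)" using A True by (intro member_le_sum) auto
      also have "\<dots> = 1" using x unfolding KK_def ip_def by (simp add: power2_eq_square)
      finally have "\<bar>x a\<bar> \<le> 1" by (simp add: abs_square_le_1)
      then show ?thesis using True by auto
    next
      case False then show ?thesis using x unfolding KK_def supp_def by auto
    qed
  qed
qed

lemma KK_compact: "finite A \<Longrightarrow> compact (KK A u r)"
proof -
  assume A: "finite A"
  have "KK A u r = Pi UNIV (\<lambda>a. if a \<in> A then {-1..1::real} else {0}) \<inter> KK A u r"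
    using KK_box[OF A] by blast
  then show ?thesis using compact_Int_closed[OF compact_box KK_closed] by metis
qed

lemma max_exists:
  assumes A: "finite A" and ne: "KK A u r \<noteq> {}"
  shows "\<exists>x\<in>KK A u r. \<forall>z\<in>KK A u r. ip A z (mv A S z) \<le> ip A x (mv A S x)"
proof -
  have "continuous_on (KK A u r) (\<lambda>z. ip A z (mv A S z))"
    unfolding qf_eq by (intro continuous_intros cont_coord)
  from continuous_attains_sup[OF KK_compact[OF A] ne this] show ?thesis .
qed



lemma ip_lin1: "ip A (\<lambda>c. x c + t * y c) w = ip A x w + t * ip A y w"
  unfolding ip_def by (simp add: distrib_right sum.distrib sum_distrib_left mult.assoc)

lemma ip_lin2: "ip A w (\<lambda>c. x c + t * y c) = ip A w x + t * ip A w y"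
  unfolding ip_def by (simp add: distrib_left sum.distrib sum_distrib_left mult.left_commute)

lemma mv_lin: "mv A S (\<lambda>c. x c + t * y c) = (\<lambda>a. mv A S x a + t * mv A S y a)"
  unfolding mv_def by (auto simp: distrib_left sum.distrib sum_distrib_left mult.left_commute)

lemma ip_mv_sym: "symm A S \<Longrightarrow> ip A x (mv A S y) = ip A y (mv A S x)"
proof -
  assume s: "symm A S"
  have "ip A x (mv A S y) = (\<Sum>a\<in>A. \<Sum>b\<in>A. x a * S a b * y b)"
    unfolding ip_def mv_def by (simp add: sum_distrib_left mult.assoc)
  also have "\<dots> = (\<Sum>b\<in>A. \<Sum>a\<in>A. y b * S b a * x a)"
    by (subst sum.swap) (use s in \<open>auto simp: symm_def intro!: sum.cong\<close>)
  also have "\<dots> = ip A y (mv A S x)"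
    unfolding ip_def mv_def by (simp add: sum_distrib_left mult.assoc)
  finally show ?thesis .
qed

lemma quad0:
  fixes a b :: real
  assumes "\<forall>t. 0 \<le> b * t + a * t\<^sup>2"
  shows "b = 0"
proof (rule ccontr)
  assume b: "b \<noteq> 0"
  define c where "c = \<bar>a\<bar> + 1"
  have c: "c > 0" "a < c" unfolding c_def by auto
  have "0 \<le> b * (- b / c) + a * (- b / c)\<^sup>2" using assms by blast
  then have "0 \<le> (b * (- b / c) + a * (- b / c)\<^sup>2) * c\<^sup>2" by simp
  also have "\<dots> = b\<^sup>2 * (a - c)" using c by (simp add: field_simps power2_eq_square)
  also have "\<dots> < 0" using b c by (simp add: mult_pos_neg)
  finally show False by simp
qed

lemma qf_scale: "ip A (\<lambda>c. if c \<in> A then z c / s else 0) (mv A S (\<lambda>c. if c \<in> A then z c / s else 0))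
   = ip A z (mv A S z) / s\<^sup>2"
proof -
  have "ip A (\<lambda>c. if c \<in> A then z c / s else 0) (mv A S (\<lambda>c. if c \<in> A then z c / s else 0))
     = (\<Sum>a\<in>A. (z a / s) * (\<Sum>b\<in>A. S a b * (z b / s)))"
    unfolding qf_eq' by (intro sum.cong refl) (auto intro!: sum.cong)
  also have "\<dots> = (\<Sum>a\<in>A. z a * (\<Sum>b\<in>A. S a b * z b)) / s\<^sup>2"
    by (simp add: sum_divide_distrib sum_distrib_left power2_eq_square field_simps)
  finally show ?thesis by (simp add: qf_eq')
qed

lemma lagrange:
  assumes A: "finite A" and s: "symm A S" and x: "x \<in> KK A u r"
    and mx: "\<forall>z\<in>KK A u r. ip A z (mv A S z) \<le> ip A x (mv A S x)"
    and y: "supp A y" and yo: "\<forall>i<r. ip A y (u i) = 0"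
  shows "ip A y (mv A S x) = ip A x (mv A S x) * ip A y x"
proof -
  define l where "l = ip A x (mv A S x)"
  have x1: "ip A x x = 1" and xo: "\<forall>i<r. ip A x (u i) = 0" and xs: "supp A x"
    using x unfolding KK_def by auto
  have key: "ip A (\<lambda>c. x c + t * y c) (mv A S (\<lambda>c. x c + t * y c)) \<le>
       l * ip A (\<lambda>c. x c + t * y c) (\<lambda>c. x c + t * y c)" for t
  proof -
    define z where "z = (\<lambda>c. x c + t * y c)"
    have "ip A z (mv A S z) \<le> l * ip A z z"
    proof (cases "ip A z z = 0")
      case True
      then have "\<And>a. a \<in> A \<Longrightarrow> z a = 0" using ip_zero[OF A] by blast
      then have "ip A z (mv A S z) = 0" unfolding qf_eq' by simp
      then show "ip A z (mv A S z) \<le> l * ip A z z" using True by simp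
    next
      case False
      then have p: "0 < ip A z z" using ip_nonneg[of A z] by simp
      have "\<forall>i<r. ip A (nrm A z) (u i) = 0"
        using xo yo by (simp add: nrm_ip z_def ip_lin1)
      then have "nrm A z \<in> KK A u r"
        unfolding KK_def using nrm_props[OF p] by blast
      then have "ip A (nrm A z) (mv A S (nrm A z)) \<le> l" using mx l_def by blast
      also have "ip A (nrm A z) (mv A S (nrm A z)) = ip A z (mv A S z) / ip A z z"
        unfolding nrm_def qf_scale using p by simp
      finally show "ip A z (mv A S z) \<le> l * ip A z z" using p by (simp add: divide_le_eq mult.commute)
    qed
    then show ?thesis unfolding z_def .
  qed
  have "\<forall>t. 0 \<le> (2 * l * ip A x y - 2 * ip A y (mv A S x)) * t + (l * ip A y y - ip A y (mv A S y)) * t\<^sup>2"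
  proof
    fix t
    have "ip A (\<lambda>c. x c + t * y c) (mv A S (\<lambda>c. x c + t * y c)) =
        l + 2 * t * ip A y (mv A S x) + t\<^sup>2 * ip A y (mv A S y)"
      unfolding mv_lin ip_lin1 ip_lin2 l_def using ip_mv_sym[OF s, of x y]
      by (simp add: algebra_simps power2_eq_square)
    moreover have "ip A (\<lambda>c. x c + t * y c) (\<lambda>c. x c + t * y c) = 1 + 2 * t * ip A x y + t\<^sup>2 * ip A y y"
      unfolding ip_lin1 ip_lin2 using x1 ip_sym[of A x y]
      by (simp add: algebra_simps power2_eq_square)
    ultimately show "0 \<le> (2 * l * ip A x y - 2 * ip A y (mv A S x)) * t + (l * ip A y y - ip A y (mv A S y)) * t\<^sup>2"
      using key[of t] by (simp add: algebra_simps)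
  qed
  from quad0[OF this] show ?thesis unfolding l_def using ip_sym[of A x y] by simp
qed



lemma ip_cong2: "(\<And>a. a \<in> A \<Longrightarrow> f a = g a) \<Longrightarrow> ip A x f = ip A x g"
  unfolding ip_def by (intro sum.cong) auto

lemma ev_supp: "a \<in> A \<Longrightarrow> supp A (ev a)"
  unfolding supp_def ev_def by auto

lemma res_supp: "supp A v \<Longrightarrow> (\<forall>i<r. supp A (u i)) \<Longrightarrow> supp A (res A u r v)"
  unfolding supp_def res_def by auto

lemma ip_ev_mv: "finite A \<Longrightarrow> a \<in> A \<Longrightarrow> ip A (ev a) (mv A S x) = mv A S x a"
  by (rule ip_ev)

lemma eigen_step:
  assumes A: "finite A" and s: "symm A S" and o: "ortho A u r"
    and us: "\<forall>i<r. supp A (u i)" and ue: "\<forall>i<r. \<forall>a\<in>A. mv A S (u i) a = lam i * u i a"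
    and x: "x \<in> KK A u r"
    and mx: "\<forall>z\<in>KK A u r. ip A z (mv A S z) \<le> ip A x (mv A S x)"
  shows "\<forall>a\<in>A. mv A S x a = ip A x (mv A S x) * x a"
proof
  fix a assume a: "a \<in> A"
  define y where "y = res A u r (ev a)"
  have xo: "\<forall>i<r. ip A x (u i) = 0" using x unfolding KK_def by auto
  have ys: "supp A y" unfolding y_def using res_supp[OF ev_supp[OF a] us] .
  have yo: "\<forall>i<r. ip A y (u i) = 0" unfolding y_def using ip_res_u[OF o] by auto
  have L: "ip A y (mv A S x) = ip A x (mv A S x) * ip A y x"
    by (rule lagrange[OF A s x mx ys yo])
  have z1: "ip A (u i) (mv A S x) = 0" if i: "i < r" for i
  proof -
    have "ip A (u i) (mv A S x) = ip A x (mv A S (u i))" by (rule ip_mv_sym[OF s])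
    also have "\<dots> = ip A x (\<lambda>c. lam i * u i c)" using ue i by (intro ip_cong2) auto
    also have "\<dots> = lam i * ip A x (u i)" unfolding ip_def by (simp add: sum_distrib_left mult.left_commute)
    finally show ?thesis using xo i by simp
  qed
  have "ip A y (mv A S x) = mv A S x a"
    unfolding y_def ip_res using z1 ip_ev[OF A a] by simp
  moreover have "ip A y x = x a"
    unfolding y_def ip_res using xo ip_ev[OF A a] by (simp add: ip_sym[of A "u _" x])
  ultimately show "mv A S x a = ip A x (mv A S x) * x a" using L by simp
qed

lemma build:
  assumes A: "finite A" and s: "symm A S"
  shows "r \<le> card A \<Longrightarrow> \<exists>u lam. ortho A u r \<and> (\<forall>i<r. supp A (u i)) \<and>
            (\<forall>i<r. \<forall>a\<in>A. mv A S (u i) a = lam i * u i a)"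
proof (induction r)
  case 0
  then show ?case by (auto simp: ortho_def)
next
  case (Suc r)
  then obtain u lam where o: "ortho A u r" and us: "\<forall>i<r. supp A (u i)"
    and ue: "\<forall>i<r. \<forall>a\<in>A. mv A S (u i) a = lam i * u i a" by auto
  have r: "r < card A" using Suc.prems by simp
  from exists_orth[OF A o r] have "KK A u r \<noteq> {}" unfolding KK_def by auto
  from max_exists[OF A this] obtain x where x: "x \<in> KK A u r"
    and mx: "\<forall>z\<in>KK A u r. ip A z (mv A S z) \<le> ip A x (mv A S x)" by blast
  have xe: "\<forall>a\<in>A. mv A S x a = ip A x (mv A S x) * x a"
    by (rule eigen_step[OF A s o us ue x mx])
  have x1: "ip A x x = 1" and xo: "\<forall>i<r. ip A x (u i) = 0" and xs: "supp A x"
    using x unfolding KK_def by auto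
  define u' where "u' = u(r := x)"
  define lam' where "lam' = lam(r := ip A x (mv A S x))"
  have "ortho A u' (Suc r)"
    unfolding ortho_def
  proof (intro allI impI)
    fix i j assume i: "i < Suc r" and j: "j < Suc r"
    show "ip A (u' i) (u' j) = (if i = j then 1 else 0)"
      using o i j x1 xo ip_sym[of A x "u i"] unfolding u'_def ortho_def
      by (cases "i = r"; cases "j = r") (auto simp: less_Suc_eq)
  qed
  moreover have "\<forall>i<Suc r. supp A (u' i)" using us xs unfolding u'_def by (auto simp: less_Suc_eq)
  moreover have "\<forall>i<Suc r. \<forall>a\<in>A. mv A S (u' i) a = lam' i * u' i a"
    using ue xe unfolding u'_def lam'_def by (auto simp: less_Suc_eq)
  ultimately show ?case by blast
qed

lemma complete:
  assumes A: "finite A" and o: "ortho A u (card A)" and us: "\<forall>i<card A. supp A (u i)"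
  shows "\<forall>a\<in>A. \<forall>c\<in>A. (\<Sum>i<card A. u i a * u i c) = (if a = c then 1 else 0)"
proof (intro ballI)
  fix a c assume a: "a \<in> A" and c: "c \<in> A"
  define w where "w = res A u (card A) (ev a)"
  have "ip A w w = 0"
  proof (rule ccontr)
    assume "ip A w w \<noteq> 0"
    then have p: "0 < ip A w w" using ip_nonneg[of A w] by simp
    have wo: "\<forall>i<card A. ip A (nrm A w) (u i) = 0"
      unfolding w_def by (simp add: nrm_ip ip_res_u[OF o])
    have n1: "ip A (nrm A w) (nrm A w) = 1" using nrm_props(2)[OF p] .
    have "ortho A (u(card A := nrm A w)) (Suc (card A))"
      unfolding ortho_def
    proof (intro allI impI)
      fix i j assume i: "i < Suc (card A)" and j: "j < Suc (card A)"
      show "ip A ((u(card A := nrm A w)) i) ((u(card A := nrm A w)) j) = (if i = j then 1 else 0)"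
        using o i j n1 wo ip_sym[of A "nrm A w" "u i"] unfolding ortho_def
        by (cases "i = card A"; cases "j = card A") (auto simp: less_Suc_eq)
    qed
    from ortho_card[OF A this] show False by simp
  qed
  then have "w c = 0" using ip_zero[OF A _ c] by blast
  then show "(\<Sum>i<card A. u i a * u i c) = (if a = c then 1 else 0)"
    unfolding w_def res_def using ip_ev[OF A a] by (auto simp: ev_def split: if_splits)
qed



lemma posdef_symm: "posdef A G \<Longrightarrow> symm A G"
  unfolding posdef_def symm_def by auto

lemma posdef_pos: "posdef A G \<Longrightarrow> (\<exists>a\<in>A. v a \<noteq> 0) \<Longrightarrow> 0 < ip A v (mv A G v)"
  unfolding posdef_def qf_eq' by (simp add: sum_distrib_left mult.assoc)

lemma psd_sqrt:
  assumes A: "finite A" and G: "posdef A G"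
  shows "\<exists>P. posdef A P \<and> (\<forall>a\<in>A. \<forall>c\<in>A. (\<Sum>b\<in>A. P a b * P b c) = G a c)"
proof -
  define N where "N = card A"
  obtain u lam where o: "ortho A u N" and us: "\<forall>i<N. supp A (u i)"
    and ue: "\<forall>i<N. \<forall>a\<in>A. mv A G (u i) a = lam i * u i a"
    using build[OF A posdef_symm[OF G], of N] N_def by auto
  have cpl: "\<forall>a\<in>A. \<forall>c\<in>A. (\<Sum>i<N. u i a * u i c) = (if a = c then 1 else 0)"
    using complete[OF A] o us N_def by auto
  have lam_pos: "0 < lam i" if i: "i < N" for i
  proof -
    have u1: "ip A (u i) (u i) = 1" using o i unfolding ortho_def by auto
    then have "\<exists>a\<in>A. u i a \<noteq> 0" unfolding ip_def by (metis (no_types, lifting) mult_zero_left sum.neutral zero_neq_one)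
    from posdef_pos[OF G this] have "0 < ip A (u i) (mv A G (u i))" .
    also have "ip A (u i) (mv A G (u i)) = ip A (u i) (\<lambda>c. lam i * u i c)"
      using ue i by (intro ip_cong2) auto
    also have "\<dots> = lam i * ip A (u i) (u i)" unfolding ip_def by (simp add: sum_distrib_left mult.left_commute)
    also have "\<dots> = lam i" using u1 by simp
    finally show ?thesis .
  qed
  define s where "s i = sqrt (lam i)" for i
  have ss: "s i * s i = lam i" if "i < N" for i using lam_pos[OF that] unfolding s_def by simp
  define P where "P a c = (\<Sum>i<N. s i * u i a * u i c)" for a c
  have Psym: "\<forall>a\<in>A. \<forall>b\<in>A. P a b = P b a" unfolding P_def by (auto intro!: sum.cong)
  have quad: "(\<Sum>a\<in>A. \<Sum>b\<in>A. v a * P a b * v b) = (\<Sum>i<N. s i * (ip A v (u i))\<^sup>2)" for v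
  proof -
    have "(\<Sum>a\<in>A. \<Sum>b\<in>A. v a * P a b * v b) = (\<Sum>a\<in>A. \<Sum>b\<in>A. \<Sum>i<N. s i * (v a * u i a) * (v b * u i b))"
      unfolding P_def by (simp add: sum_distrib_left sum_distrib_right mult_ac)
    also have "\<dots> = (\<Sum>a\<in>A. \<Sum>i<N. \<Sum>b\<in>A. s i * (v a * u i a) * (v b * u i b))"
      by (rule sum.cong[OF refl], rule sum.swap)
    also have "\<dots> = (\<Sum>i<N. \<Sum>a\<in>A. \<Sum>b\<in>A. s i * (v a * u i a) * (v b * u i b))"
      by (rule sum.swap)
    also have "\<dots> = (\<Sum>i<N. s i * (ip A v (u i))\<^sup>2)"
      unfolding ip_def power2_eq_square by (simp add: sum_distrib_left sum_distrib_right mult_ac)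
    finally show ?thesis .
  qed
  have "posdef A P"
    unfolding posdef_def
  proof (intro conjI allI impI Psym)
    fix v :: "'a \<Rightarrow> real" assume v: "\<exists>a\<in>A. v a \<noteq> 0"
    have nn: "\<forall>i\<in>{..<N}. 0 \<le> s i * (ip A v (u i))\<^sup>2" 
    proof
      fix i assume "i \<in> {..<N}"
      then have "0 \<le> s i" using lam_pos[of i] unfolding s_def by simp
      then show "0 \<le> s i * (ip A v (u i))\<^sup>2" by simp
    qed
    have "\<exists>i\<in>{..<N}. s i * (ip A v (u i))\<^sup>2 \<noteq> 0"
    proof (rule ccontr)
      assume "\<not> ?thesis"
      then have z0: "\<forall>i<N. sqrt (lam i) * (ip A v (u i))\<^sup>2 = 0" unfolding s_def by auto
      have z: "\<forall>i<N. ip A v (u i) = 0"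
      proof (intro allI impI)
        fix i assume i: "i < N"
        then have "sqrt (lam i) \<noteq> 0" using lam_pos[OF i] by simp
        moreover have "sqrt (lam i) * (ip A v (u i))\<^sup>2 = 0" using z0 i by blast
        ultimately show "ip A v (u i) = 0" by simp
      qed
      from v obtain a where a: "a \<in> A" "v a \<noteq> 0" by blast
      have "v a = (\<Sum>c\<in>A. v c * (if a = c then 1 else 0))" using a A by (simp add: if_distrib cong: if_cong)
      also have "\<dots> = (\<Sum>c\<in>A. v c * (\<Sum>i<N. u i a * u i c))" using cpl a by (intro sum.cong) auto
      also have "\<dots> = (\<Sum>c\<in>A. \<Sum>i<N. u i a * (v c * u i c))" by (simp add: sum_distrib_left mult_ac)
      also have "\<dots> = (\<Sum>i<N. \<Sum>c\<in>A. u i a * (v c * u i c))" by (rule sum.swap)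
      also have "\<dots> = (\<Sum>i<N. u i a * ip A v (u i))" by (simp add: ip_def sum_distrib_left)
      also have "\<dots> = 0" using z by simp
      finally show False using a by simp
    qed
    then have "0 < (\<Sum>i<N. s i * (ip A v (u i))\<^sup>2)"
      using nn by (metis (no_types, lifting) finite_lessThan less_eq_real_def sum_nonneg sum_nonneg_eq_0_iff)
    then show "0 < (\<Sum>a\<in>A. \<Sum>b\<in>A. v a * P a b * v b)" using quad by simp
  qed
  moreover have "\<forall>a\<in>A. \<forall>c\<in>A. (\<Sum>b\<in>A. P a b * P b c) = G a c"
  proof (intro ballI)
    fix a c assume a: "a \<in> A" and c: "c \<in> A"
    have "(\<Sum>b\<in>A. P a b * P b c) = (\<Sum>b\<in>A. \<Sum>i<N. \<Sum>j<N. (s i * u i a) * (s j * u j c) * (u i b * u j b))"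
      unfolding P_def by (simp add: sum_product mult_ac)
    also have "\<dots> = (\<Sum>i<N. \<Sum>b\<in>A. \<Sum>j<N. (s i * u i a) * (s j * u j c) * (u i b * u j b))"
      by (rule sum.swap)
    also have "\<dots> = (\<Sum>i<N. \<Sum>j<N. \<Sum>b\<in>A. (s i * u i a) * (s j * u j c) * (u i b * u j b))"
      by (rule sum.cong[OF refl], rule sum.swap)
    also have "\<dots> = (\<Sum>i<N. \<Sum>j<N. (s i * u i a) * (s j * u j c) * ip A (u i) (u j))"
      unfolding ip_def by (simp add: sum_distrib_left)
    also have "\<dots> = (\<Sum>i<N. (s i * u i a) * (s i * u i c))"
    proof (rule sum.cong[OF refl])
      fix i assume i: "i \<in> {..<N}"
      have "(\<Sum>j<N. (s i * u i a) * (s j * u j c) * ip A (u i) (u j)) = (\<Sum>j<N. if j = i then (s i * u i a) * (s j * u j c) else 0)"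
        using o i unfolding ortho_def by (intro sum.cong) auto
      then show "(\<Sum>j<N. (s i * u i a) * (s j * u j c) * ip A (u i) (u j)) = (s i * u i a) * (s i * u i c)"
        using i by simp
    qed
    also have "\<dots> = (\<Sum>i<N. lam i * u i a * u i c)"
      by (intro sum.cong refl) (simp add: ss[symmetric] mult_ac)
    also have "\<dots> = G a c"
    proof -
      have "G a c = (\<Sum>b\<in>A. G a b * (if b = c then 1 else 0))" using c A by (simp add: if_distrib cong: if_cong)
      also have "\<dots> = (\<Sum>b\<in>A. G a b * (\<Sum>i<N. u i b * u i c))" using cpl c by (intro sum.cong) auto
      also have "\<dots> = (\<Sum>b\<in>A. \<Sum>i<N. u i c * (G a b * u i b))" by (simp add: sum_distrib_left mult_ac)
      also have "\<dots> = (\<Sum>i<N. \<Sum>b\<in>A. u i c * (G a b * u i b))" by (rule sum.swap)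
      also have "\<dots> = (\<Sum>i<N. u i c * mv A G (u i) a)"
        unfolding mv_def using a by (simp add: sum_distrib_left)
      also have "\<dots> = (\<Sum>i<N. lam i * u i a * u i c)"
        using ue a by (intro sum.cong) auto
      finally show ?thesis by simp
    qed
    finally show "(\<Sum>b\<in>A. P a b * P b c) = G a c" .
  qed
  ultimately show ?thesis by blast
qed



definition Lf :: "(('n \<Rightarrow>\<^sub>0 nat) \<Rightarrow> real) \<Rightarrow> 'n rpoly \<Rightarrow> real" where
  "Lf y p = (\<Sum>\<gamma>\<in>Poly_Mapping.keys p. Poly_Mapping.lookup p \<gamma> * y \<gamma>)"

lemma Lf_superset: "finite F \<Longrightarrow> Poly_Mapping.keys p \<subseteq> F \<Longrightarrow>
   Lf y p = (\<Sum>\<gamma>\<in>F. Poly_Mapping.lookup p \<gamma> * y \<gamma>)"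
  unfolding Lf_def by (rule sum.mono_neutral_left) (auto simp: in_keys_iff)

lemma Lf_zero [simp]: "Lf y 0 = 0"
  unfolding Lf_def by simp

lemma Lf_add: "Lf y (p + q) = Lf y p + Lf y q"
proof -
  let ?F = "Poly_Mapping.keys p \<union> Poly_Mapping.keys q"
  have "Lf y (p + q) = (\<Sum>\<gamma>\<in>?F. Poly_Mapping.lookup (p + q) \<gamma> * y \<gamma>)"
    using keys_add[of p q] by (intro Lf_superset) auto
  also have "\<dots> = (\<Sum>\<gamma>\<in>?F. Poly_Mapping.lookup p \<gamma> * y \<gamma>) + (\<Sum>\<gamma>\<in>?F. Poly_Mapping.lookup q \<gamma> * y \<gamma>)"
    by (simp add: lookup_add distrib_right sum.distrib)
  also have "\<dots> = Lf y p + Lf y q"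
    by (subst (1 2) Lf_superset[of ?F]) auto
  finally show ?thesis .
qed

lemma Lf_sum: "Lf y (\<Sum>i\<in>I. f i) = (\<Sum>i\<in>I. Lf y (f i))"
  by (induction I rule: infinite_finite_induct) (auto simp: Lf_add)

lemma Lf_single: "Lf y (Poly_Mapping.single \<gamma> c) = c * y \<gamma>"
  unfolding Lf_def by auto

lemma lookup_pconst_mult: "Poly_Mapping.lookup (pconst c * p) \<gamma> = c * Poly_Mapping.lookup p \<gamma>"
  by (simp add: pconst_def mult_map_scale_conv_mult[symmetric] map.rep_eq when_def)

lemma keys_pconst_mult: "Poly_Mapping.keys (pconst c * p) \<subseteq> Poly_Mapping.keys p"
  by (auto simp: in_keys_iff lookup_pconst_mult)

lemma Lf_pconst_mult: "Lf y (pconst c * p) = c * Lf y p"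
proof -
  have "Lf y (pconst c * p) = (\<Sum>\<gamma>\<in>Poly_Mapping.keys p. Poly_Mapping.lookup (pconst c * p) \<gamma> * y \<gamma>)"
    using keys_pconst_mult by (intro Lf_superset) auto
  then show ?thesis by (simp add: lookup_pconst_mult Lf_def sum_distrib_left mult.assoc)
qed

lemma expand: "p = (\<Sum>\<delta>\<in>Poly_Mapping.keys p. Poly_Mapping.single \<delta> (Poly_Mapping.lookup p \<delta>))"
proof (rule poly_mapping_eqI)
  fix k
  show "Poly_Mapping.lookup p k = Poly_Mapping.lookup (\<Sum>\<delta>\<in>Poly_Mapping.keys p. Poly_Mapping.single \<delta> (Poly_Mapping.lookup p \<delta>)) k"
    by (simp add: lookup_sum lookup_single when_def in_keys_iff)
qed

lemma Lf_mult_single: "Lf y (q * Poly_Mapping.single \<gamma> c) =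
   c * (\<Sum>\<delta>\<in>Poly_Mapping.keys q. Poly_Mapping.lookup q \<delta> * y (\<gamma> + \<delta>))"
proof -
  have "q * Poly_Mapping.single \<gamma> c = (\<Sum>\<delta>\<in>Poly_Mapping.keys q. Poly_Mapping.single (\<delta> + \<gamma>) (Poly_Mapping.lookup q \<delta> * c))"
    by (subst expand[of q]) (simp add: sum_distrib_right mult_single)
  then show ?thesis
    by (simp add: Lf_sum Lf_single sum_distrib_left mult_ac add.commute)
qed

lemma Lf_gram: "Lf y (gram_poly d G) = (\<Sum>\<alpha>\<in>mons d. \<Sum>\<beta>\<in>mons d. G \<alpha> \<beta> * mom_mat y \<alpha> \<beta>)"
  unfolding gram_poly_def by (simp add: Lf_sum Lf_single mom_mat_def)

lemma Lf_loc: "Lf y (q * gram_poly d G) = (\<Sum>\<alpha>\<in>mons d. \<Sum>\<beta>\<in>mons d. G \<alpha> \<beta> * loc_mat q y \<alpha> \<beta>)"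
  unfolding gram_poly_def
  by (simp add: sum_distrib_left Lf_sum Lf_mult_single loc_mat_def add.commute)

lemma mdeg_UNIV: "mdeg (\<alpha> :: 'n::finite \<Rightarrow>\<^sub>0 nat) = (\<Sum>i\<in>UNIV. Poly_Mapping.lookup \<alpha> i)"
  unfolding mdeg_def by (rule sum.mono_neutral_left) (auto simp: in_keys_iff)

lemma mdeg_add: "mdeg ((\<alpha> :: 'n::finite \<Rightarrow>\<^sub>0 nat) + \<beta>) = mdeg \<alpha> + mdeg \<beta>"
  by (simp add: mdeg_UNIV lookup_add sum.distrib)

lemma mdeg_single1: "mdeg (Poly_Mapping.single (i::'n::finite) (1::nat)) = 1"
  by (simp add: mdeg_UNIV lookup_single when_def)

lemma mdeg_zero: "mdeg (0 :: 'n::finite \<Rightarrow>\<^sub>0 nat) = 0"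
  by (simp add: mdeg_def)

lemma split_mon:
  "mdeg (\<gamma> :: 'n::finite \<Rightarrow>\<^sub>0 nat) \<le> a + b \<Longrightarrow> \<exists>\<alpha> \<beta>. \<gamma> = \<alpha> + \<beta> \<and> mdeg \<alpha> \<le> a \<and> mdeg \<beta> \<le> b"
proof (induction a arbitrary: \<gamma>)
  case 0
  then show ?case by (intro exI[of _ 0] exI[of _ \<gamma>]) (simp add: mdeg_zero)
next
  case (Suc a)
  show ?case
  proof (cases "mdeg \<gamma> \<le> a + b")
    case True
    then obtain \<alpha> \<beta> where "\<gamma> = \<alpha> + \<beta>" "mdeg \<alpha> \<le> a" "mdeg \<beta> \<le> b" using Suc.IH by blast
    then show ?thesis by (intro exI[of _ \<alpha>] exI[of _ \<beta>]) simp
  next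
    case False
    then have "0 < mdeg \<gamma>" by simp
    then obtain i where i: "0 < Poly_Mapping.lookup \<gamma> i" unfolding mdeg_UNIV
      by (metis gr0I sum.neutral)
    define \<gamma>' where "\<gamma>' = \<gamma> - Poly_Mapping.single i 1"
    have g: "\<gamma> = \<gamma>' + Poly_Mapping.single i 1"
      by (rule poly_mapping_eqI) (use i in \<open>auto simp: \<gamma>'_def lookup_add lookup_minus lookup_single when_def\<close>)
    have m: "mdeg \<gamma> = mdeg \<gamma>' + 1" using g mdeg_add mdeg_single1 by metis
    then have "mdeg \<gamma>' \<le> a + b" using Suc.prems by linarith
    then obtain \<alpha> \<beta> where ab: "\<gamma>' = \<alpha> + \<beta>" "mdeg \<alpha> \<le> a" "mdeg \<beta> \<le> b" using Suc.IH by blast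
    have m2: "mdeg (\<alpha> + Poly_Mapping.single i 1) = mdeg \<alpha> + 1" using mdeg_add mdeg_single1 by metis
    have "\<gamma> = (\<alpha> + Poly_Mapping.single i 1) + \<beta>" using ab g by (simp add: ac_simps)
    then show ?thesis using m2 ab by (intro exI[of _ "\<alpha> + Poly_Mapping.single i 1"] exI[of _ \<beta>]) simp
  qed
qed

lemma keys_le_pdeg: "\<gamma> \<in> Poly_Mapping.keys p \<Longrightarrow> mdeg \<gamma> \<le> pdeg p"
  unfolding pdeg_def by (auto intro: Max_ge)

lemma Lf_ideal:
  fixes \<psi> h :: "'n::finite rpoly"
  assumes deg: "pdeg \<psi> \<le> 2 * d"
    and z: "\<forall>\<alpha>\<in>mons d. \<forall>\<beta>\<in>mons d. loc_mat h y \<alpha> \<beta> = 0"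
  shows "Lf y (\<psi> * h) = 0"
proof -
  have "\<psi> * h = (\<Sum>\<gamma>\<in>Poly_Mapping.keys \<psi>. h * Poly_Mapping.single \<gamma> (Poly_Mapping.lookup \<psi> \<gamma>))"
  proof -
    have "\<psi> * h = h * (\<Sum>\<gamma>\<in>Poly_Mapping.keys \<psi>. Poly_Mapping.single \<gamma> (Poly_Mapping.lookup \<psi> \<gamma>))"
      using expand[of \<psi>] by (metis mult.commute)
    also have "\<dots> = (\<Sum>\<gamma>\<in>Poly_Mapping.keys \<psi>. h * Poly_Mapping.single \<gamma> (Poly_Mapping.lookup \<psi> \<gamma>))"
      by (rule sum_distrib_left)
    finally show ?thesis .
  qed
  then have "Lf y (\<psi> * h) = (\<Sum>\<gamma>\<in>Poly_Mapping.keys \<psi>. Lf y (h * Poly_Mapping.single \<gamma> (Poly_Mapping.lookup \<psi> \<gamma>)))"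
    by (simp add: Lf_sum)
  also have "\<dots> = 0"
  proof (rule sum.neutral, rule ballI)
    fix \<gamma> assume g: "\<gamma> \<in> Poly_Mapping.keys \<psi>"
    have "mdeg \<gamma> \<le> d + d" using keys_le_pdeg[OF g] deg by simp
    then obtain \<alpha> \<beta> where ab: "\<gamma> = \<alpha> + \<beta>" "mdeg \<alpha> \<le> d" "mdeg \<beta> \<le> d" using split_mon by blast
    have "(\<Sum>\<delta>\<in>Poly_Mapping.keys h. Poly_Mapping.lookup h \<delta> * y (\<gamma> + \<delta>)) = loc_mat h y \<alpha> \<beta>"
      unfolding loc_mat_def ab(1) by simp
    also have "\<dots> = 0" using z ab by (auto simp: mons_def)
    finally show "Lf y (h * Poly_Mapping.single \<gamma> (Poly_Mapping.lookup \<psi> \<gamma>)) = 0"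
      by (simp add: Lf_mult_single)
  qed
  finally show ?thesis .
qed

lemma mons_lookup_le: "\<alpha> \<in> mons d \<Longrightarrow> Poly_Mapping.lookup (\<alpha> :: 'n::finite \<Rightarrow>\<^sub>0 nat) i \<le> d"
proof -
  assume "\<alpha> \<in> mons d"
  moreover have "Poly_Mapping.lookup \<alpha> i \<le> mdeg \<alpha>"
    unfolding mdeg_UNIV by (rule member_le_sum) auto
  ultimately show ?thesis unfolding mons_def by simp
qed

lemma finite_mons: "finite (mons d :: ('n::finite \<Rightarrow>\<^sub>0 nat) set)"
proof -
  have le: "Poly_Mapping.lookup \<alpha> i \<le> mdeg \<alpha>" for \<alpha> :: "'n \<Rightarrow>\<^sub>0 nat" and i
    unfolding mdeg_UNIV by (rule member_le_sum) auto
  have "Poly_Mapping.lookup ` (mons d :: ('n \<Rightarrow>\<^sub>0 nat) set) \<subseteq> PiE UNIV (\<lambda>_. {0..d})"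
    by (auto simp: PiE_UNIV_domain intro: mons_lookup_le)
  moreover have "finite (PiE (UNIV::'n set) (\<lambda>_. {0..d}))" by (intro finite_PiE) auto
  ultimately have "finite (Poly_Mapping.lookup ` (mons d :: ('n \<Rightarrow>\<^sub>0 nat) set))" by (rule finite_subset)
  moreover have "inj_on Poly_Mapping.lookup (mons d :: ('n \<Rightarrow>\<^sub>0 nat) set)"
    by (intro inj_onI poly_mapping_eqI) auto
  ultimately show ?thesis using finite_imageD by blast
qed



lemma trace_eq:
  assumes "symm A P"
  shows "trace_PXP A P X = (\<Sum>b\<in>A. \<Sum>c\<in>A. (\<Sum>a\<in>A. P b a * P a c) * X b c)"
proof -
  have "trace_PXP A P X = (\<Sum>b\<in>A. \<Sum>c\<in>A. \<Sum>a\<in>A. P a b * X b c * P c a)"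
    unfolding trace_PXP_def by (subst sum.swap) (rule sum.cong[OF refl], rule sum.swap)
  also have "\<dots> = (\<Sum>b\<in>A. \<Sum>c\<in>A. \<Sum>a\<in>A. P b a * P a c * X b c)"
    using assms unfolding symm_def by (intro sum.cong refl) (simp add: mult_ac)
  also have "\<dots> = (\<Sum>b\<in>A. \<Sum>c\<in>A. (\<Sum>a\<in>A. P b a * P a c) * X b c)"
    by (simp add: sum_distrib_right)
  finally show ?thesis .
qed

lemma posdef_scale: "posdef A G \<Longrightarrow> 0 < c \<Longrightarrow> posdef A (\<lambda>a b. c * G a b)"
  unfolding posdef_def
proof (intro conjI allI impI ballI)
  fix v :: "'a \<Rightarrow> real" assume G: "(\<forall>a\<in>A. \<forall>b\<in>A. G a b = G b a) \<and>
    (\<forall>v. (\<exists>a\<in>A. v a \<noteq> 0) \<longrightarrow> 0 < (\<Sum>a\<in>A. \<Sum>b\<in>A. v a * G a b * v b))"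
    and c: "0 < c" and v: "\<exists>a\<in>A. v a \<noteq> 0"
  have "(\<Sum>a\<in>A. \<Sum>b\<in>A. v a * (c * G a b) * v b) = c * (\<Sum>a\<in>A. \<Sum>b\<in>A. v a * G a b * v b)"
    by (simp add: sum_distrib_left mult_ac)
  then show "0 < (\<Sum>a\<in>A. \<Sum>b\<in>A. v a * (c * G a b) * v b)" using G c v by simp
qed (auto)

lemma gram_scale: "pconst c * gram_poly d G = gram_poly d (\<lambda>a b. c * G a b)"
  unfolding gram_poly_def pconst_def by (simp add: sum_distrib_left mult_single)

lemma pdeg_mono: "Poly_Mapping.keys p \<subseteq> Poly_Mapping.keys q \<Longrightarrow> pdeg p \<le> pdeg q"
  unfolding pdeg_def
  by (auto intro!: Max_mono)

lemma qm_scale: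
  assumes p: "p \<in> qm_int k g" and c: "0 < c"
  shows "pconst c * p \<in> qm_int k g"
proof -
  obtain G0 Gs where l: "length Gs = length g" and G0: "posdef (mons k) G0"
    and Gs: "\<forall>i<length g. posdef (mons (k - pceil (g ! i))) (Gs ! i)"
    and pe: "p = gram_poly k G0 + (\<Sum>i<length g. g ! i * gram_poly (k - pceil (g ! i)) (Gs ! i))"
    using p unfolding qm_int_def by blast
  define Gs' where "Gs' = map (\<lambda>G a b. c * G a b) Gs"
  have "pconst c * p = gram_poly k (\<lambda>a b. c * G0 a b) +
      (\<Sum>i<length g. g ! i * gram_poly (k - pceil (g ! i)) (Gs' ! i))"
  proof -
    have lc: "pconst c * (x * y) = x * (pconst c * y)" for x y :: "'a rpoly" by (rule mult.left_commute)
    have "pconst c * p = pconst c * gram_poly k G0 +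
      (\<Sum>i<length g. pconst c * (g ! i * gram_poly (k - pceil (g ! i)) (Gs ! i)))"
      unfolding pe by (simp add: distrib_left sum_distrib_left)
    also have "\<dots> = gram_poly k (\<lambda>a b. c * G0 a b) +
      (\<Sum>i<length g. g ! i * gram_poly (k - pceil (g ! i)) (Gs' ! i))"
      using l unfolding lc gram_scale Gs'_def by (intro arg_cong2[where f="(+)"] sum.cong) auto
    finally show ?thesis .
  qed
  moreover have "\<forall>i<length g. posdef (mons (k - pceil (g ! i))) (Gs' ! i)"
    using Gs l c unfolding Gs'_def by (auto intro: posdef_scale)
  moreover have "length Gs' = length g" using l unfolding Gs'_def by simp
  ultimately show ?thesis unfolding qm_int_def using posdef_scale[OF G0 c] by blast
qed

lemma ti_scale:
  assumes q: "q \<in> trunc_ideal k h"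
  shows "pconst c * q \<in> trunc_ideal k h"
proof -
  obtain \<psi>s where l: "length \<psi>s = length h"
    and d: "\<forall>j<length h. pdeg (\<psi>s ! j) \<le> 2 * (k - pceil (h ! j))"
    and qe: "q = (\<Sum>j<length h. \<psi>s ! j * h ! j)"
    using q unfolding trunc_ideal_def by blast
  define \<psi>s' where "\<psi>s' = map (\<lambda>\<psi>. pconst c * \<psi>) \<psi>s"
  have "pconst c * q = (\<Sum>j<length h. \<psi>s' ! j * h ! j)"
    unfolding qe \<psi>s'_def using l by (simp add: sum_distrib_left mult.assoc)
  moreover have "\<forall>j<length h. pdeg (\<psi>s' ! j) \<le> 2 * (k - pceil (h ! j))"
    using d l unfolding \<psi>s'_def by (auto intro: order_trans[OF pdeg_mono[OF keys_pconst_mult]])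
  moreover have "length \<psi>s' = length h" using l unfolding \<psi>s'_def by simp
  ultimately show ?thesis unfolding trunc_ideal_def by blast
qed

lemma QI_scale: "p \<in> QI k g h \<Longrightarrow> 0 < c \<Longrightarrow> pconst c * p \<in> QI k g h"
  unfolding QI_def using qm_scale ti_scale by (fastforce simp: distrib_left)

lemma pconst_mult1: "pconst c * pconst 1 = pconst c"
  unfolding pconst_def by (simp add: mult_single)

lemma equiv_k:
  "(pconst ` {0<..} \<subseteq> QI k g h \<longleftrightarrow> (\<forall>\<delta>>0. pconst \<delta> \<in> QI k g h)) \<and>
   ((\<forall>\<delta>>0. pconst \<delta> \<in> QI k g h) \<longleftrightarrow> pconst 1 \<in> QI k g h)"
  using QI_scale[of "pconst 1" k g h] by (auto simp: pconst_mult1)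

lemma choice_lt: "\<forall>i<n. \<exists>P. Q i P \<Longrightarrow> \<exists>F. \<forall>i<n. Q i (F i)"
  by metis

lemma Lf_pconst1: "Lf y (pconst 1) = y 0"
  unfolding pconst_def by (rule trans[OF Lf_single]) simp

lemma one_CTP_k:
  fixes g h :: "'n::finite rpoly list"
  assumes "pconst 1 \<in> QI k g h"
  shows "\<exists>a>0. \<exists>P0 Ps. length Ps = length g \<and>
      posdef (mons k) P0 \<and> (\<forall>i<length g. posdef (mons (k - pceil (g ! i))) (Ps ! i)) \<and>
      (\<forall>y. (\<forall>j<length h. \<forall>\<alpha>\<in>mons (k - pceil (h ! j)). \<forall>\<beta>\<in>mons (k - pceil (h ! j)).
               loc_mat (h ! j) y \<alpha> \<beta> = 0) \<and> y 0 = 1 \<longrightarrow>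
           trace_PXP (mons k) P0 (mom_mat y) +
           (\<Sum>i<length g. trace_PXP (mons (k - pceil (g ! i))) (Ps ! i) (loc_mat (g ! i) y)) = a)"
proof -
  obtain p q where pq: "pconst 1 = p + q" and p: "p \<in> qm_int k g" and q: "q \<in> trunc_ideal k h"
    using assms unfolding QI_def by blast
  obtain G0 Gs where l: "length Gs = length g" and G0: "posdef (mons k) G0"
    and Gs: "\<forall>i<length g. posdef (mons (k - pceil (g ! i))) (Gs ! i)"
    and pe: "p = gram_poly k G0 + (\<Sum>i<length g. g ! i * gram_poly (k - pceil (g ! i)) (Gs ! i))"
    using p unfolding qm_int_def by blast
  obtain \<psi>s where l2: "length \<psi>s = length h"
    and d: "\<forall>j<length h. pdeg (\<psi>s ! j) \<le> 2 * (k - pceil (h ! j))"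
    and qe: "q = (\<Sum>j<length h. \<psi>s ! j * h ! j)"
    using q unfolding trunc_ideal_def by blast
  obtain P0 where P0: "posdef (mons k) P0"
    and P0s: "\<forall>a\<in>mons k. \<forall>c\<in>mons k. (\<Sum>b\<in>mons k. P0 a b * P0 b c) = G0 a c"
    using psd_sqrt[OF finite_mons G0] by blast
  have "\<forall>i<length g. \<exists>P. posdef (mons (k - pceil (g ! i))) P \<and>
     (\<forall>a\<in>mons (k - pceil (g ! i)). \<forall>c\<in>mons (k - pceil (g ! i)).
        (\<Sum>b\<in>mons (k - pceil (g ! i)). P a b * P b c) = (Gs ! i) a c)"
    using Gs psd_sqrt[OF finite_mons] by blast
  from choice_lt[OF this] obtain F where F: "\<forall>i<length g. posdef (mons (k - pceil (g ! i))) (F i) \<and>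
     (\<forall>a\<in>mons (k - pceil (g ! i)). \<forall>c\<in>mons (k - pceil (g ! i)).
        (\<Sum>b\<in>mons (k - pceil (g ! i)). F i a b * F i b c) = (Gs ! i) a c)" by blast
  define Ps where "Ps = map F [0..<length g]"
  have Psi: "i < length g \<Longrightarrow> Ps ! i = F i" for i unfolding Ps_def by simp
  have tr: "trace_PXP A P X = (\<Sum>b\<in>A. \<Sum>c\<in>A. G b c * X b c)"
    if "posdef A P" "\<forall>a\<in>A. \<forall>c\<in>A. (\<Sum>b\<in>A. P a b * P b c) = G a c" for A P G X
    using that by (simp add: trace_eq posdef_symm)
  show ?thesis
  proof (intro exI[of _ 1] exI[of _ P0] exI[of _ Ps] conjI allI impI)
    show "length Ps = length g" unfolding Ps_def by simp
    show "posdef (mons k) P0" by fact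
    show "\<And>i. i < length g \<Longrightarrow> posdef (mons (k - pceil (g ! i))) (Ps ! i)" using F Psi by auto
    fix y assume y: "(\<forall>j<length h. \<forall>\<alpha>\<in>mons (k - pceil (h ! j)). \<forall>\<beta>\<in>mons (k - pceil (h ! j)).
               loc_mat (h ! j) y \<alpha> \<beta> = 0) \<and> y 0 = 1"
    have "Lf y q = 0" unfolding qe Lf_sum using y d l2 by (intro sum.neutral ballI Lf_ideal) auto
    moreover have "Lf y p = trace_PXP (mons k) P0 (mom_mat y) +
           (\<Sum>i<length g. trace_PXP (mons (k - pceil (g ! i))) (Ps ! i) (loc_mat (g ! i) y))"
    proof -
      have ti: "(\<Sum>\<alpha>\<in>mons (k - pceil (g ! i)). \<Sum>\<beta>\<in>mons (k - pceil (g ! i)).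
           (Gs ! i) \<alpha> \<beta> * loc_mat (g ! i) y \<alpha> \<beta>) =
         trace_PXP (mons (k - pceil (g ! i))) (Ps ! i) (loc_mat (g ! i) y)" if i: "i < length g" for i
      proof -
        have "trace_PXP (mons (k - pceil (g ! i))) (F i) (loc_mat (g ! i) y) =
          (\<Sum>\<alpha>\<in>mons (k - pceil (g ! i)). \<Sum>\<beta>\<in>mons (k - pceil (g ! i)).
           (Gs ! i) \<alpha> \<beta> * loc_mat (g ! i) y \<alpha> \<beta>)"
          by (rule tr) (use F i in auto)
        then show ?thesis using Psi[OF i] by simp
      qed
      show ?thesis
        unfolding pe Lf_add Lf_sum Lf_gram Lf_loc tr[OF P0 P0s]
        by (intro arg_cong2[where f="(+)"] refl sum.cong) (auto simp: ti)
    qed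
    moreover have "Lf y (pconst 1) = 1" using y by (simp add: Lf_pconst1)
    moreover have "Lf y (pconst 1) = Lf y p + Lf y q" unfolding pq by (rule Lf_add)
    ultimately show "trace_PXP (mons k) P0 (mom_mat y) +
           (\<Sum>i<length g. trace_PXP (mons (k - pceil (g ! i))) (Ps ! i) (loc_mat (g ! i) y)) = 1"
      by linarith
  qed simp
qed

lemma one_CTP:
  "(\<forall>k\<ge>kmin f g h. pconst 1 \<in> QI k g h) \<Longrightarrow> CTP f g h"
  unfolding CTP_def using one_CTP_k by blast



lemma posdef_sq:
  assumes A: "finite A" and P: "posdef A P" and a: "0 < a"
  shows "posdef A (\<lambda>x z. (\<Sum>c\<in>A. P x c * P c z) / a)"
  unfolding posdef_def
proof (intro conjI allI impI ballI)
  have s: "symm A P" using posdef_symm[OF P] .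
  fix x z assume x: "x \<in> A" and z: "z \<in> A"
  show "(\<Sum>c\<in>A. P x c * P c z) / a = (\<Sum>c\<in>A. P z c * P c x) / a"
    using s x z unfolding symm_def by (simp add: mult.commute cong: sum.cong)
next
  have s: "symm A P" using posdef_symm[OF P] .
  fix v :: "'a \<Rightarrow> real" assume v: "\<exists>a\<in>A. v a \<noteq> 0"
  define w where "w c = (\<Sum>x\<in>A. v x * P x c)" for c
  have "0 < (\<Sum>x\<in>A. \<Sum>c\<in>A. v x * P x c * v c)" using P v unfolding posdef_def by blast
  also have "\<dots> = (\<Sum>c\<in>A. w c * v c)"
    unfolding w_def by (subst sum.swap) (simp add: sum_distrib_right)
  finally have pos: "0 < (\<Sum>c\<in>A. w c * v c)" .
  have "\<exists>c\<in>A. w c \<noteq> 0"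
  proof (rule ccontr)
    assume "\<not> ?thesis"
    then have "(\<Sum>c\<in>A. w c * v c) = 0" by (intro sum.neutral) auto
    with pos show False by simp
  qed
  then obtain c0 where c0: "c0 \<in> A" "w c0 \<noteq> 0" by blast
  have "0 < (\<Sum>c\<in>A. (w c)\<^sup>2)"
    using A c0 by (intro sum_pos2[of A c0]) auto
  also have "(\<Sum>c\<in>A. (w c)\<^sup>2) = (\<Sum>x\<in>A. \<Sum>z\<in>A. v x * (\<Sum>c\<in>A. P x c * P c z) * v z)"
  proof -
    have wz: "w c = (\<Sum>z\<in>A. P c z * v z)" if "c \<in> A" for c
      unfolding w_def using s that unfolding symm_def by (intro sum.cong) auto
    have "(\<Sum>c\<in>A. (w c)\<^sup>2) = (\<Sum>c\<in>A. (\<Sum>x\<in>A. v x * P x c) * (\<Sum>z\<in>A. P c z * v z))"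
      using wz by (intro sum.cong) (auto simp: power2_eq_square w_def)
    also have "\<dots> = (\<Sum>c\<in>A. \<Sum>x\<in>A. \<Sum>z\<in>A. v x * P x c * P c z * v z)"
      by (simp add: sum_product mult_ac)
    also have "\<dots> = (\<Sum>x\<in>A. \<Sum>z\<in>A. \<Sum>c\<in>A. v x * P x c * P c z * v z)"
      by (subst sum.swap) (rule sum.cong[OF refl], rule sum.swap)
    also have "\<dots> = (\<Sum>x\<in>A. \<Sum>z\<in>A. v x * (\<Sum>c\<in>A. P x c * P c z) * v z)"
      by (simp add: sum_distrib_left sum_distrib_right mult_ac)
    finally show ?thesis .
  qed
  finally have "0 < (\<Sum>x\<in>A. \<Sum>z\<in>A. v x * (\<Sum>c\<in>A. P x c * P c z) * v z) / a" using a by simp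
  moreover have e: "\<And>x z. v x * ((\<Sum>c\<in>A. P x c * P c z) / a) * v z = (v x * (\<Sum>c\<in>A. P x c * P c z) * v z) / a"
    by (metis times_divide_eq_right times_divide_eq_left)
  moreover have "(\<Sum>x\<in>A. \<Sum>z\<in>A. v x * ((\<Sum>c\<in>A. P x c * P c z) / a) * v z) =
     (\<Sum>x\<in>A. \<Sum>z\<in>A. v x * (\<Sum>c\<in>A. P x c * P c z) * v z) / a"
  proof -
    have "(\<Sum>x\<in>A. \<Sum>z\<in>A. v x * ((\<Sum>c\<in>A. P x c * P c z) / a) * v z) =
      (\<Sum>x\<in>A. \<Sum>z\<in>A. (v x * (\<Sum>c\<in>A. P x c * P c z) * v z) / a)"
      by (rule sum.cong[OF refl], rule sum.cong[OF refl], rule e)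
    also have "\<dots> = (\<Sum>x\<in>A. \<Sum>z\<in>A. v x * (\<Sum>c\<in>A. P x c * P c z) * v z) / a"
      by (simp only: sum_divide_distrib)
    finally show ?thesis .
  qed
  ultimately show "0 < (\<Sum>x\<in>A. \<Sum>z\<in>A. v x * ((\<Sum>c\<in>A. P x c * P c z) / a) * v z)"
    by simp
qed

lemma Lf_ylin: "Lf (\<lambda>\<delta>. y \<delta> + z \<delta>) p = Lf y p + Lf z p"
  unfolding Lf_def by (simp add: distrib_left sum.distrib)

lemma Lf_delta: "Lf (\<lambda>\<delta>. if \<delta> = \<gamma> then 1 else 0) p = Poly_Mapping.lookup p \<gamma>"
proof -
  have "Lf (\<lambda>\<delta>. if \<delta> = \<gamma> then 1 else 0) p =
      (\<Sum>\<delta>\<in>insert \<gamma> (Poly_Mapping.keys p). Poly_Mapping.lookup p \<delta> * (if \<delta> = \<gamma> then 1 else 0))"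
    by (intro Lf_superset) auto
  also have "\<dots> = (\<Sum>\<delta>\<in>insert \<gamma> (Poly_Mapping.keys p). if \<delta> = \<gamma> then Poly_Mapping.lookup p \<delta> else 0)"
    by (intro sum.cong) auto
  also have "\<dots> = Poly_Mapping.lookup p \<gamma>" by simp
  finally show ?thesis .
qed

lemma coeff_one:
  assumes "\<forall>y. y 0 = 1 \<longrightarrow> Lf y p = 1"
  shows "p = pconst 1"
proof -
  have l0: "Poly_Mapping.lookup p 0 = 1"
    using assms[rule_format, of "\<lambda>\<delta>. if \<delta> = 0 then 1 else 0"] Lf_delta[of 0 p] by simp
  show ?thesis
  proof (rule poly_mapping_eqI)
    fix \<gamma>
    show "Poly_Mapping.lookup p \<gamma> = Poly_Mapping.lookup (pconst 1) \<gamma>"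
    proof (cases "\<gamma> = 0")
      case True then show ?thesis using l0 by (simp add: pconst_def)
    next
      case False
      have "Lf (\<lambda>\<delta>. (if \<delta> = 0 then 1 else 0) + (if \<delta> = \<gamma> then 1 else 0)) p = 1"
        using assms False by simp
      then have "Poly_Mapping.lookup p \<gamma> = 0" using l0 Lf_delta[of 0 p] Lf_delta[of \<gamma> p] by (simp add: Lf_ylin)
      then show ?thesis using False by (simp only: pconst_def lookup_single) (simp add: when_def)
    qed
  qed
qed

lemma CTP_one_k:
  fixes g :: "'n::finite rpoly list"
  assumes "\<exists>a>0. \<exists>P0 Ps. length Ps = length g \<and>
      posdef (mons k) P0 \<and> (\<forall>i<length g. posdef (mons (k - pceil (g ! i))) (Ps ! i)) \<and>
      (\<forall>y. (\<forall>j<length ([]::'n rpoly list). \<forall>\<alpha>\<in>mons (k - pceil (([]::'n rpoly list) ! j)). \<forall>\<beta>\<in>mons (k - pceil (([]::'n rpoly list) ! j)).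
               loc_mat (([]::'n rpoly list) ! j) y \<alpha> \<beta> = 0) \<and> y 0 = 1 \<longrightarrow>
           trace_PXP (mons k) P0 (mom_mat y) +
           (\<Sum>i<length g. trace_PXP (mons (k - pceil (g ! i))) (Ps ! i) (loc_mat (g ! i) y)) = a)"
  shows "pconst 1 \<in> qm_int k g"
proof -
  obtain a P0 Ps where a: "0 < a" and l: "length Ps = length g" and P0: "posdef (mons k) P0"
    and Ps: "\<forall>i<length g. posdef (mons (k - pceil (g ! i))) (Ps ! i)"
    and T: "\<forall>y. y 0 = 1 \<longrightarrow> trace_PXP (mons k) P0 (mom_mat y) +
           (\<Sum>i<length g. trace_PXP (mons (k - pceil (g ! i))) (Ps ! i) (loc_mat (g ! i) y)) = a"
    using assms by auto
  define sq where "sq A P = (\<lambda>x z. (\<Sum>c\<in>A. P x c * P c z) / a)" for A :: "('n \<Rightarrow>\<^sub>0 nat) set" and P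
  define G0 where "G0 = sq (mons k) P0"
  define Gs where "Gs = map (\<lambda>i. sq (mons (k - pceil (g ! i))) (Ps ! i)) [0..<length g]"
  define p where "p = gram_poly k G0 + (\<Sum>i<length g. g ! i * gram_poly (k - pceil (g ! i)) (Gs ! i))"
  have pd: "posdef (mons d) (sq (mons d) P)" if "posdef (mons d) P" for d P
    unfolding sq_def using posdef_sq[OF finite_mons that a] .
  have inq: "p \<in> qm_int k g"
    unfolding qm_int_def p_def
    using pd P0 Ps by (auto simp: G0_def Gs_def intro!: exI[of _ G0] exI[of _ Gs])
  have tr: "(\<Sum>\<alpha>\<in>A. \<Sum>\<beta>\<in>A. sq A P \<alpha> \<beta> * X \<alpha> \<beta>) = trace_PXP A P X / a" if "posdef A P" for A P X
  proof -
    have "(\<Sum>\<alpha>\<in>A. \<Sum>\<beta>\<in>A. sq A P \<alpha> \<beta> * X \<alpha> \<beta>) =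
        (\<Sum>\<alpha>\<in>A. \<Sum>\<beta>\<in>A. ((\<Sum>c\<in>A. P \<alpha> c * P c \<beta>) * X \<alpha> \<beta>) / a)"
      unfolding sq_def by (rule sum.cong[OF refl], rule sum.cong[OF refl], rule times_divide_eq_left)
    also have "\<dots> = (\<Sum>\<alpha>\<in>A. \<Sum>\<beta>\<in>A. (\<Sum>c\<in>A. P \<alpha> c * P c \<beta>) * X \<alpha> \<beta>) / a"
      by (simp only: sum_divide_distrib)
    also have "\<dots> = trace_PXP A P X / a"
      unfolding trace_eq[OF posdef_symm[OF that]] ..
    finally show ?thesis .
  qed
  have "\<forall>y. y 0 = 1 \<longrightarrow> Lf y p = 1"
  proof (intro allI impI)
    fix y :: "('n \<Rightarrow>\<^sub>0 nat) \<Rightarrow> real" assume y: "y 0 = 1"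
    have "Lf y p = trace_PXP (mons k) P0 (mom_mat y) / a +
           (\<Sum>i<length g. trace_PXP (mons (k - pceil (g ! i))) (Ps ! i) (loc_mat (g ! i) y) / a)"
      unfolding p_def Lf_add Lf_sum Lf_gram Lf_loc G0_def tr[OF P0]
      by (intro arg_cong2[where f="(+)"] refl sum.cong) (use Ps tr in \<open>auto simp: Gs_def\<close>)
    also have "\<dots> = (trace_PXP (mons k) P0 (mom_mat y) +
           (\<Sum>i<length g. trace_PXP (mons (k - pceil (g ! i))) (Ps ! i) (loc_mat (g ! i) y))) / a"
      by (simp only: add_divide_distrib sum_divide_distrib)
    also have "\<dots> = a / a"
    proof -
      have Ty: "trace_PXP (mons k) P0 (mom_mat y) +
           (\<Sum>i<length g. trace_PXP (mons (k - pceil (g ! i))) (Ps ! i) (loc_mat (g ! i) y)) = a"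
        using T y by blast
      show ?thesis by (subst Ty) (rule refl)
    qed
    finally show "Lf y p = 1" using a by simp
  qed
  from coeff_one[OF this] inq show ?thesis by simp
qed

lemma QI_nil: "QI k g [] = qm_int k g"
  unfolding QI_def trunc_ideal_def by auto

theorem theorem1:
  fixes f :: "'n::finite rpoly" and g h :: "'n rpoly list"
  shows "(\<forall>k\<ge>kmin f g h.
            (pconst ` {0<..} \<subseteq> QI k g h \<longleftrightarrow> (\<forall>\<delta>>0. pconst \<delta> \<in> QI k g h)) \<and>
            ((\<forall>\<delta>>0. pconst \<delta> \<in> QI k g h) \<longleftrightarrow> pconst 1 \<in> QI k g h))
       \<and> ((\<forall>k\<ge>kmin f g h. pconst ` {0<..} \<subseteq> QI k g h) \<longrightarrow> CTP f g h)
       \<and> (h = [] \<and> interior (semialg g) \<noteq> {} \<longrightarrow>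
            (CTP f g h \<longleftrightarrow> (\<forall>k\<ge>kmin f g h. pconst ` {0<..} \<subseteq> qm_int k g)))"
proof (intro conjI allI impI)
  fix k show "pconst ` {0<..} \<subseteq> QI k g h \<longleftrightarrow> (\<forall>\<delta>>0. pconst \<delta> \<in> QI k g h)"
    using equiv_k by blast
next
  fix k show "(\<forall>\<delta>>0. pconst \<delta> \<in> QI k g h) \<longleftrightarrow> pconst 1 \<in> QI k g h"
    using equiv_k by blast
next
  assume A: "\<forall>k\<ge>kmin f g h. pconst ` {0<..} \<subseteq> QI k g h"
  have p1: "pconst 1 \<in> pconst ` {0::real<..}" by (rule imageI) simp
  show "CTP f g h"
  proof (intro one_CTP allI impI)
    fix k assume "kmin f g h \<le> k"
    then show "pconst 1 \<in> QI k g h" using A p1 by blast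
  qed
next
  assume h: "h = [] \<and> interior (semialg g) \<noteq> {}"
  show "CTP f g h \<longleftrightarrow> (\<forall>k\<ge>kmin f g h. pconst ` {0<..} \<subseteq> qm_int k g)"
  proof
    assume c: "CTP f g h"
    show "\<forall>k\<ge>kmin f g h. pconst ` {0<..} \<subseteq> qm_int k g"
    proof (intro allI impI subsetI)
      fix k and x :: "'n rpoly" assume k: "kmin f g h \<le> k" and x: "x \<in> pconst ` {0<..}"
      then obtain \<delta> where d: "0 < \<delta>" "x = pconst \<delta>" by auto
      have "pconst 1 \<in> qm_int k g"
        using c k h unfolding CTP_def by (intro CTP_one_k) auto
      from qm_scale[OF this d(1)] show "x \<in> qm_int k g" using d by (simp add: pconst_mult1)
    qed
  next
    assume A: "\<forall>k\<ge>kmin f g h. pconst ` {0<..} \<subseteq> qm_int k g"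
    have p1: "pconst 1 \<in> pconst ` {0::real<..}" by (rule imageI) simp
    show "CTP f g h"
    proof (intro one_CTP allI impI)
      fix k assume "kmin f g h \<le> k"
      then have "pconst 1 \<in> qm_int k g" using A p1 by blast
      then show "pconst 1 \<in> QI k g h" using h by (simp add: QI_nil)
    qed
  qed
qed


end
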